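(* Let $\alpha=(\alpha_1,\dots,\alpha_n)$ be a composition, $\lambda$ a partition, and $k\ge0$ an integer with $\lambda_1-k\le n$. Let $T$ be a semistandard Young tableau of shape $\lambda\oplus\Delta_\alpha$ with lattice reading word such that the first row of $\lambda$ in $T$ contains at most $k$ entries equal to $1$. Then the tableau of shape $\mathcal{S}(\lambda,\alpha;k)$ obtained from $T$ by keeping the filling of $\Delta_\alpha$ and moving the filled copy of $\lambda$ (unchanged) to the right into the foundation position of $\mathcal{S}(\lambda,\alpha;k)$ is also a semistandard Young tableau with lattice reading word.
   Context: Diagrams use English convention: boxes $(r,c)$ with row index increasing downward, column index increasing rightward. For a composition $\alpha=(\alpha_1,\dots,\alpha_n)$, $|\alpha|=\sum_i\alpha_i$, and $\Delta_\alpha$ is the $180^\circ$ rotation of the Ferrers diagram of the partition $(n^{\alpha_n},(n-1)^{\alpha_{n-1}},\dots,1^{\alpha_1})$; it occupies rows $1,\dots,|\alpha|$, each row right-justified ending in column $n$, with $\alpha_i$ rows of length $i$, row lengths weakly increasing downward. For diagrams $D_1,D_2$, the direct sum $D_1\oplus D_2$ is the diagram consisting of disjoint copies of $D_1$ and $D_2$ placed so that the top-right box of $D_1$ is one step left and one step down from the bottom-left box of $D_2$. For $k\ge0$ and a partition $\lambda$ with $\lambda_1-k\le n$, $\mathcal{S}(\lambda,\alpha;k)$ consists of $\Delta_\alpha$ together with a copy of the Ferrers diagram of $\lambda$ (the foundation) placed so that row $r$ of $\lambda$ occupies row $|\alpha|+r$, columns $1-k$ through $\lambda_r-k$ (the first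 row of $\lambda$ starts one row below and $k$ columns left of the bottom-left box of $\Delta_\alpha$). A tableau is a filling of boxes by positive integers; it is semistandard if rows weakly increase left to right and columns strictly increase top to bottom. The reading word reads rows right to left, top row to bottom row; a sequence is lattice if in every initial segment, for every $j\ge1$, the number of $j$'s is at least the number of $(j+1)$'s. *)

theory Defs
  imports Main
begin

text \<open>Boxes are (row, column) pairs of integers, English convention:
  rows increase downward, columns increase rightward.\<close>

type_synonym box = "int \<times> int"
type_synonym diagram = "box set"
type_synonym tableau = "box \<Rightarrow> nat"

definition is_partition :: "nat list \<Rightarrow> bool" where
  "is_partition lam \<longleftrightarrow> sorted_wrt (\<ge>) lam \<and> (\<forall>x\<in>set lam. 0 < x)"

definition is_composition :: "nat list \<Rightarrow> bool" where
  "is_composition alpha \<longleftrightarrow> (\<forall>x\<in>set alpha. 0 < x)"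

definition part1 :: "nat list \<Rightarrow> nat" where
  "part1 lam = (case lam of [] \<Rightarrow> 0 | x # _ \<Rightarrow> x)"

definition ferrers :: "nat list \<Rightarrow> diagram" where
  "ferrers lam = {(r, c). 1 \<le> r \<and> r \<le> int (length lam) \<and> 1 \<le> c \<and> c \<le> int (lam ! nat (r - 1))}"

definition shift :: "box \<Rightarrow> diagram \<Rightarrow> diagram" where
  "shift d D = (\<lambda>(r, c). (r + fst d, c + snd d)) ` D"

definition top_right :: "diagram \<Rightarrow> box" where
  "top_right D = (let r = Min (fst ` D) in (r, Max {c. (r, c) \<in> D}))"

definition bottom_left :: "diagram \<Rightarrow> box" where
  "bottom_left D = (let r = Max (fst ` D) in (r, Min {c. (r, c) \<in> D}))"

text \<open>Translation applied to D1 in the direct sum D1 (+) D2: the top-right box of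
  D1 is moved one step left and one step down from the bottom-left box of D2.\<close>
definition dsum_offset :: "diagram \<Rightarrow> diagram \<Rightarrow> box" where
  "dsum_offset D1 D2 =
     (fst (bottom_left D2) + 1 - fst (top_right D1),
      snd (bottom_left D2) - 1 - snd (top_right D1))"

definition direct_sum :: "diagram \<Rightarrow> diagram \<Rightarrow> diagram" where
  "direct_sum D1 D2 = shift (dsum_offset D1 D2) D1 \<union> D2"

definition row_lengths :: "nat list \<Rightarrow> nat list" where
  "row_lengths alpha = concat (map (\<lambda>i. replicate (alpha ! i) (i + 1)) [0..<length alpha])"

definition delta :: "nat list \<Rightarrow> diagram" where
  "delta alpha = {(r, c). 1 \<le> r \<and> r \<le> int (sum_list alpha) \<and>
      int (length alpha) - int (row_lengths alpha ! nat (r - 1)) + 1 \<le> c \<and> c \<le> int (length alpha)}"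

definition foundation :: "nat list \<Rightarrow> nat list \<Rightarrow> nat \<Rightarrow> diagram" where
  "foundation lam alpha k = shift (int (sum_list alpha), - int k) (ferrers lam)"

definition S_diag :: "nat list \<Rightarrow> nat list \<Rightarrow> nat \<Rightarrow> diagram" where
  "S_diag lam alpha k = delta alpha \<union> foundation lam alpha k"

definition semistandard :: "diagram \<Rightarrow> tableau \<Rightarrow> bool" where
  "semistandard D T \<longleftrightarrow>
     (\<forall>b\<in>D. 0 < T b) \<and>
     (\<forall>r c c'. (r, c) \<in> D \<longrightarrow> (r, c') \<in> D \<longrightarrow> c \<le> c' \<longrightarrow> T (r, c) \<le> T (r, c')) \<and>
     (\<forall>r r' c. (r, c) \<in> D \<longrightarrow> (r', c) \<in> D \<longrightarrow> r < r' \<longrightarrow> T (r, c) < T (r', c))"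

definition reading_word :: "diagram \<Rightarrow> tableau \<Rightarrow> nat list" where
  "reading_word D T =
     concat (map (\<lambda>r. map (\<lambda>c. T (r, c)) (rev (sorted_list_of_set {c. (r, c) \<in> D})))
                 (sorted_list_of_set (fst ` D)))"

definition lattice_word :: "nat list \<Rightarrow> bool" where
  "lattice_word w \<longleftrightarrow>
     (\<forall>i \<le> length w. \<forall>j \<ge> 1. count_list (take i w) (j + 1) \<le> count_list (take i w) j)"

definition moved_tableau :: "nat list \<Rightarrow> nat list \<Rightarrow> nat \<Rightarrow> tableau \<Rightarrow> tableau" where
  "moved_tableau lam alpha k T = (\<lambda>(r, c).
     if (r, c) \<in> delta alpha then T (r, c)
     else (let d = dsum_offset (ferrers lam) (delta alpha)
           in T (r - int (sum_list alpha) + fst d, c + int k + snd d)))"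

end

theory Submission
  imports Defs
begin


lemma shift_mem: "(r,c) \<in> shift (a,b) D \<longleftrightarrow> (r - a, c - b) \<in> D"
proof
  assume "(r,c) \<in> shift (a,b) D"
  then obtain x y where "(x,y) \<in> D" "(r,c) = (x + a, y + b)" unfolding shift_def by auto
  then show "(r - a, c - b) \<in> D" by simp
next
  assume h: "(r - a, c - b) \<in> D"
  show "(r,c) \<in> shift (a,b) D" unfolding shift_def
    by (rule image_eqI[OF _ h]) simp
qed

lemma strict_sorted_sls: "sorted_wrt (<) (sorted_list_of_set A)"
  using sorted_list_of_set.strict_sorted_key_list_of_set[of A] by simp

lemma sorted_list_of_set_image_mono:
  fixes f :: "'a::linorder \<Rightarrow> 'b::linorder"
  assumes "strict_mono f" "finite A"
  shows "sorted_list_of_set (f ` A) = map f (sorted_list_of_set A)"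
proof -
  have s1: "sorted_wrt (<) (sorted_list_of_set (f ` A))"
    by (rule strict_sorted_sls)
  have s2: "sorted_wrt (<) (map f (sorted_list_of_set A))"
    using sorted_list_of_set.strict_sorted_key_list_of_set[of A] assms(1)
    by (auto simp: sorted_wrt_map strict_mono_less intro: sorted_wrt_mono_rel)
  have "set (map f (sorted_list_of_set A)) = f ` A" using assms by simp
  then show ?thesis using strict_sorted_equal[OF s2 s1] assms by simp
qed

lemma count_list_map_distinct:
  "distinct xs \<Longrightarrow> count_list (map f xs) v = card {x \<in> set xs. f x = v}"
proof (induction xs)
  case Nil then show ?case by simp
next
  case (Cons x xs)
  have "{y \<in> set (x#xs). f y = v} = (if f x = v then insert x {y \<in> set xs. f y = v} else {y \<in> set xs. f y = v})"
    by auto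
  then show ?case using Cons by (auto simp: card_insert_if)
qed


definition rle :: "box \<Rightarrow> box \<Rightarrow> bool" where
  "rle a b \<longleftrightarrow> fst a < fst b \<or> (fst a = fst b \<and> snd b \<le> snd a)"

definition rlt :: "box \<Rightarrow> box \<Rightarrow> bool" where
  "rlt a b \<longleftrightarrow> fst a < fst b \<or> (fst a = fst b \<and> snd b < snd a)"

definition boxlist :: "diagram \<Rightarrow> box list" where
  "boxlist D = concat (map (\<lambda>r. map (\<lambda>c. (r, c)) (rev (sorted_list_of_set {c. (r, c) \<in> D})))
                 (sorted_list_of_set (fst ` D)))"

lemma rw_boxlist: "reading_word D T = map T (boxlist D)"
  by (simp add: reading_word_def boxlist_def map_concat comp_def)

lemma finite_row: "finite D \<Longrightarrow> finite {c. (r, c) \<in> D}"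
proof -
  assume "finite D"
  have "{c. (r, c) \<in> D} \<subseteq> snd ` D"
  proof
    fix c assume "c \<in> {c. (r, c) \<in> D}"
    then show "c \<in> snd ` D" by (intro image_eqI[where x="(r,c)"]) simp_all
  qed
  then show ?thesis using \<open>finite D\<close> finite_subset by blast
qed

lemma set_boxlist: assumes "finite D" shows "set (boxlist D) = D"
proof -
  have "set (boxlist D) = (\<Union>r\<in>fst ` D. (\<lambda>c. (r,c)) ` {c. (r,c) \<in> D})"
    using assms by (simp add: boxlist_def finite_row)
  also have "\<dots> = D"
  proof (rule set_eqI, rule iffI)
    fix x assume "x \<in> (\<Union>r\<in>fst ` D. (\<lambda>c. (r,c)) ` {c. (r,c) \<in> D})"
    then show "x \<in> D" by blast
  next
    fix x assume x: "x \<in> D"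
    obtain a b where ab: "x = (a, b)" by (cases x)
    have "a \<in> fst ` D" using x ab by force
    moreover have "x \<in> (\<lambda>c. (a,c)) ` {c. (a,c) \<in> D}" using x ab by blast
    ultimately show "x \<in> (\<Union>r\<in>fst ` D. (\<lambda>c. (r,c)) ` {c. (r,c) \<in> D})" by blast
  qed
  finally show ?thesis .
qed

lemma sorted_concat_rows:
  "sorted_wrt (<) rs \<Longrightarrow> (\<forall>r. sorted_wrt (>) (cs r)) \<Longrightarrow>
   sorted_wrt rlt (concat (map (\<lambda>r. map (\<lambda>c. (r, c)) (cs r)) rs))"
proof (induction rs)
  case Nil then show ?case by simp
next
  case (Cons r rs)
  have h1: "sorted_wrt rlt (map (\<lambda>c. (r, c)) (cs r))"
    using Cons.prems(2) by (auto simp: sorted_wrt_map rlt_def intro: sorted_wrt_mono_rel)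
  have h2: "sorted_wrt rlt (concat (map (\<lambda>r. map (\<lambda>c. (r, c)) (cs r)) rs))" using Cons by simp
  have h3: "\<forall>x \<in> set (map (\<lambda>c. (r, c)) (cs r)). \<forall>y \<in> set (concat (map (\<lambda>r. map (\<lambda>c. (r, c)) (cs r)) rs)). rlt x y"
    using Cons.prems(1) by (auto simp: rlt_def)
  show ?case using h1 h2 h3 by (simp only: concat.simps list.map sorted_wrt_append)
qed

lemma sorted_boxlist: "finite D \<Longrightarrow> sorted_wrt rlt (boxlist D)"
  unfolding boxlist_def
  apply (rule sorted_concat_rows)
   apply (rule strict_sorted_sls)
  by (simp add: sorted_wrt_rev strict_sorted_sls)

lemma sorted_wrt_irrefl_distinct: "(\<And>x. \<not> P x x) \<Longrightarrow> sorted_wrt P xs \<Longrightarrow> distinct xs"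
  by (induction xs) auto

lemma distinct_boxlist: "finite D \<Longrightarrow> distinct (boxlist D)"
proof -
  assume f: "finite D"
  have "sorted_wrt rlt (boxlist D)" using sorted_boxlist[OF f] .
  moreover have "\<And>x. \<not> rlt x x" by (auto simp: rlt_def)
  ultimately show ?thesis
    using sorted_wrt_irrefl_distinct[of rlt] by blast
qed

lemma take_set_rle:
  assumes "sorted_wrt rlt L" "i < length L"
  shows "set (take (Suc i) L) = {x \<in> set L. rle x (L ! i)}"
proof
  show "set (take (Suc i) L) \<subseteq> {x \<in> set L. rle x (L ! i)}"
  proof
    fix x assume "x \<in> set (take (Suc i) L)"
    then obtain i' where i': "i' < length (take (Suc i) L)" "x = take (Suc i) L ! i'"
      by (auto simp: in_set_conv_nth)
    then have "i' \<le> i" "x = L ! i'" using assms by auto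
    moreover have "rle (L ! i') (L ! i)"
    proof (cases "i' = i")
      case True then show ?thesis by (simp add: rle_def)
    next
      case False
      then have "rlt (L ! i') (L ! i)" using assms \<open>i' \<le> i\<close> by (simp add: sorted_wrt_nth_less)
      then show ?thesis by (auto simp: rle_def rlt_def)
    qed
    ultimately show "x \<in> {x \<in> set L. rle x (L ! i)}" using assms by auto
  qed
next
  show "{x \<in> set L. rle x (L ! i)} \<subseteq> set (take (Suc i) L)"
  proof
    fix x assume "x \<in> {x \<in> set L. rle x (L ! i)}"
    then obtain i' where i': "i' < length L" "x = L ! i'" "rle x (L ! i)"
      by (auto simp: in_set_conv_nth)
    have "i' \<le> i"
    proof (rule ccontr)
      assume "\<not> i' \<le> i"
      then have "rlt (L ! i) (L ! i')" using assms i' by (simp add: sorted_wrt_nth_less)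
      then show False using i' by (auto simp: rle_def rlt_def)
    qed
    have l: "i' < length (take (Suc i) L)" using i'(1) \<open>i' \<le> i\<close> by simp
    have "take (Suc i) L ! i' = x" using i'(2) \<open>i' \<le> i\<close> by simp
    then show "x \<in> set (take (Suc i) L)" using nth_mem[OF l] by simp
  qed
qed

lemma lattice_card:
  assumes fin: "finite D" and lw: "lattice_word (reading_word D T)" and b: "b \<in> D" and j: "1 \<le> j"
  shows "card {b'\<in>D. rle b' b \<and> T b' = j + 1} \<le> card {b'\<in>D. rle b' b \<and> T b' = j}"
proof -
  let ?L = "boxlist D"
  have "b \<in> set ?L" using b set_boxlist[OF fin] by simp
  then obtain i where i: "i < length ?L" "?L ! i = b"
    by (auto simp: in_set_conv_nth)
  have st: "set (take (Suc i) ?L) = {b'\<in>D. rle b' b}"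
    using take_set_rle[OF sorted_boxlist[OF fin] i(1)] i(2) set_boxlist[OF fin] by simp
  have dt: "distinct (take (Suc i) ?L)" using distinct_boxlist[OF fin] by simp
  have cnt: "count_list (take (Suc i) (reading_word D T)) v = card {b'\<in>D. rle b' b \<and> T b' = v}" for v
    unfolding rw_boxlist take_map count_list_map_distinct[OF dt] st by (rule arg_cong[where f=card]) auto
  have "Suc i \<le> length (reading_word D T)" using i by (simp add: rw_boxlist)
  then have "count_list (take (Suc i) (reading_word D T)) (j+1) \<le> count_list (take (Suc i) (reading_word D T)) j"
    using lw j unfolding lattice_word_def by blast
  then show ?thesis by (simp only: cnt)
qed




lemma rw_transfer:
  fixes \<rho> :: "int \<Rightarrow> int" and \<sigma> :: "int \<Rightarrow> int \<Rightarrow> int"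
  assumes finD: "finite D" and finD': "finite D'"
    and rho: "strict_mono \<rho>" "surj \<rho>"
    and sig: "\<And>r. strict_mono (\<sigma> r)"
    and cols: "\<And>r. {c. (\<rho> r, c) \<in> D} = \<sigma> r ` {c. (r,c) \<in> D'}"
    and vals: "\<And>r c. (r,c) \<in> D' \<Longrightarrow> T' (r,c) = T (\<rho> r, \<sigma> r c)"
  shows "reading_word D' T' = reading_word D T"
proof -
  have rows: "fst ` D = \<rho> ` fst ` D'"
  proof (rule set_eqI, rule iffI)
    fix x assume "x \<in> fst ` D"
    then obtain c where xc: "(x,c) \<in> D" by force
    obtain r where xr: "x = \<rho> r" using rho(2) by (metis surjD)
    then have "c \<in> \<sigma> r ` {c. (r,c)\<in>D'}" using cols[of r] xc by blast
    then obtain c' where "(r,c') \<in> D'" by blast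
    then show "x \<in> \<rho> ` fst ` D'" using xr by force
  next
    fix x assume "x \<in> \<rho> ` fst ` D'"
    then obtain r c where xr: "x = \<rho> r" "(r,c) \<in> D'" by force
    then have "\<sigma> r c \<in> {c. (\<rho> r, c) \<in> D}" using cols[of r] by blast
    then show "x \<in> fst ` D" using xr by force
  qed
  have row_eq: "map (\<lambda>c. T (\<rho> r, c)) (rev (sorted_list_of_set {c. (\<rho> r, c) \<in> D}))
      = map (\<lambda>c. T' (r, c)) (rev (sorted_list_of_set {c. (r, c) \<in> D'}))" for r
  proof -
    have "sorted_list_of_set {c. (\<rho> r, c) \<in> D} = map (\<sigma> r) (sorted_list_of_set {c. (r, c) \<in> D'})"
      unfolding cols by (rule sorted_list_of_set_image_mono[OF sig finite_row[OF finD']])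
    then have "map (\<lambda>c. T (\<rho> r, c)) (rev (sorted_list_of_set {c. (\<rho> r, c) \<in> D}))
       = map (\<lambda>c. T (\<rho> r, \<sigma> r c)) (rev (sorted_list_of_set {c. (r, c) \<in> D'}))"
      by (simp add: rev_map)
    also have "\<dots> = map (\<lambda>c. T' (r, c)) (rev (sorted_list_of_set {c. (r, c) \<in> D'}))"
      by (rule map_cong[OF refl]) (simp add: vals finite_row[OF finD'])
    finally show ?thesis .
  qed
  have "reading_word D T = concat (map (\<lambda>r. map (\<lambda>c. T (r, c)) (rev (sorted_list_of_set {c. (r, c) \<in> D})))
      (map \<rho> (sorted_list_of_set (fst ` D'))))"
    unfolding reading_word_def rows sorted_list_of_set_image_mono[OF rho(1) finite_imageI[OF finD']] ..
  also have "\<dots> = reading_word D' T'"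
    unfolding reading_word_def map_map comp_def row_eq ..
  finally show ?thesis by simp
qed

lemma ss_translate:
  assumes ss: "semistandard D T"
    and inD: "\<And>r c. (r,c) \<in> D' \<Longrightarrow> (r+a, c+b) \<in> D"
    and val: "\<And>r c. (r,c) \<in> D' \<Longrightarrow> T' (r,c) = T (r+a, c+b)"
  shows "semistandard D' T'"
proof -
  have p: "\<And>x. x \<in> D \<Longrightarrow> 0 < T x"
    and rw: "\<And>r c c'. (r, c) \<in> D \<Longrightarrow> (r, c') \<in> D \<Longrightarrow> c \<le> c' \<Longrightarrow> T (r, c) \<le> T (r, c')"
    and cl: "\<And>r r' c. (r, c) \<in> D \<Longrightarrow> (r', c) \<in> D \<Longrightarrow> r < r' \<Longrightarrow> T (r, c) < T (r', c)"
    using ss unfolding semistandard_def by blast+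
  show ?thesis unfolding semistandard_def
  proof (intro conjI allI impI ballI)
    fix x assume "x \<in> D'"
    then show "0 < T' x" using p inD val by (cases x) auto
  next
    fix r c c' assume "(r, c) \<in> D'" "(r, c') \<in> D'" "c \<le> c'"
    then show "T' (r, c) \<le> T' (r, c')" using rw[of "r+a" "c+b" "c'+b"] inD val by auto
  next
    fix r r' c assume "(r, c) \<in> D'" "(r', c) \<in> D'" "r < r'"
    then show "T' (r, c) < T' (r', c)" using cl[of "r+a" "c+b" "r'+a"] inD val by auto
  qed
qed




definition Kc :: "diagram \<Rightarrow> int \<Rightarrow> int \<Rightarrow> nat" where
  "Kc E r c = card {r'. 1 \<le> r' \<and> r' \<le> r \<and> (r', c) \<in> E}"

lemma finite_Kset: "finite {r'::int. 1 \<le> r' \<and> r' \<le> r \<and> P r'}"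
  by (rule finite_subset[of _ "{1..r}"]) auto

locale ds_setup =
  fixes D Dl Dd :: diagram and T :: tableau and m n p j :: int and g :: "int \<Rightarrow> int"
  assumes D_eq: "D = Dl \<union> Dd"
    and Dd_mem: "\<And>r c. (r,c) \<in> Dd \<longleftrightarrow> 1 \<le> r \<and> r \<le> m \<and> g r \<le> c \<and> c \<le> n"
    and g_anti: "\<And>r r'. 1 \<le> r \<Longrightarrow> r \<le> r' \<Longrightarrow> r' \<le> m \<Longrightarrow> g r' \<le> g r"
    and g_pos: "\<And>r. 1 \<le> r \<Longrightarrow> r \<le> m \<Longrightarrow> 1 \<le> g r"
    and Dl_rows: "\<And>r c. (r,c) \<in> Dl \<Longrightarrow> m < r"
    and Dl_row1: "\<And>x. (m+1,x) \<in> Dl \<longleftrightarrow> 1 - p \<le> x \<and> x \<le> 0"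
    and fin: "finite D"
    and ss: "semistandard D T"
    and lat: "\<And>b i. b \<in> D \<Longrightarrow> 1 \<le> i \<Longrightarrow>
       card {b'\<in>D. rle b' b \<and> T b' = i+1} \<le> card {b'\<in>D. rle b' b \<and> T b' = i}"
    and j_le: "j \<le> n" "j \<le> p"
    and ones: "\<And>x. 1 - j \<le> x \<Longrightarrow> x \<le> 0 \<Longrightarrow> 2 \<le> T (m+1, x)"
begin

lemma T_pos: "x \<in> D \<Longrightarrow> 0 < T x"
  using ss unfolding semistandard_def by blast
lemma T_row: "(r, c) \<in> D \<Longrightarrow> (r, c') \<in> D \<Longrightarrow> c \<le> c' \<Longrightarrow> T (r, c) \<le> T (r, c')"
  using ss unfolding semistandard_def by blast
lemma T_col: "(r, c) \<in> D \<Longrightarrow> (r', c) \<in> D \<Longrightarrow> r < r' \<Longrightarrow> T (r, c) < T (r', c)"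
  using ss unfolding semistandard_def by blast

lemma Dd_D: "x \<in> Dd \<Longrightarrow> x \<in> D" using D_eq by blast
lemma Dl_D: "x \<in> Dl \<Longrightarrow> x \<in> D" using D_eq by blast

lemma K_step:
  assumes "(r,c) \<in> Dd" shows "Kc Dd r c = Kc Dd (r-1) c + 1"
proof -
  have e: "{r'. 1 \<le> r' \<and> r' \<le> r \<and> (r', c) \<in> Dd} = insert r {r'. 1 \<le> r' \<and> r' \<le> r - 1 \<and> (r', c) \<in> Dd}"
    using assms Dd_mem by auto
  have fin: "finite {r'. 1 \<le> r' \<and> r' \<le> r - 1 \<and> (r', c) \<in> Dd}" by (rule finite_Kset)
  have nin: "r \<notin> {r'. 1 \<le> r' \<and> r' \<le> r - 1 \<and> (r', c) \<in> Dd}" by simp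
  show ?thesis unfolding Kc_def e card_insert_disjoint[OF fin nin] by simp
qed

lemma K_zero:
  assumes "(r,c) \<in> Dd" "(r-1,c) \<notin> Dd" shows "Kc Dd (r-1) c = 0"
proof -
  have e: "{r'. 1 \<le> r' \<and> r' \<le> r - 1 \<and> (r', c) \<in> Dd} = {}"
  proof (rule ccontr)
    assume "{r'. 1 \<le> r' \<and> r' \<le> r - 1 \<and> (r', c) \<in> Dd} \<noteq> {}"
    then obtain r' where r': "1 \<le> r'" "r' \<le> r - 1" "(r', c) \<in> Dd" by blast
    have "g (r-1) \<le> g r'" using g_anti[of r' "r-1"] r' assms(1) Dd_mem by auto
    then have "(r-1,c) \<in> Dd" using r' assms(1) Dd_mem by auto
    then show False using assms(2) by blast
  qed
  show ?thesis unfolding Kc_def e by simp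
qed

lemma K_mono_c: "c \<le> c' \<Longrightarrow> c' \<le> n \<Longrightarrow> Kc Dd r c \<le> Kc Dd r c'"
  unfolding Kc_def by (rule card_mono[OF finite_Kset]) (auto simp: Dd_mem)

lemma K_mono_r: "r \<le> r' \<Longrightarrow> Kc Dd r c \<le> Kc Dd r' c"
  unfolding Kc_def by (rule card_mono[OF finite_Kset]) auto

lemma K_lower_nat: "\<forall>c. (int i, c) \<in> Dd \<longrightarrow> Kc Dd (int i) c \<le> T (int i, c)"
proof (induction i)
  case 0 then show ?case using Dd_mem by auto
next
  case (Suc i)
  show ?case
  proof (intro allI impI)
    fix c assume c: "(int (Suc i), c) \<in> Dd"
    have ks: "Kc Dd (int (Suc i)) c = Kc Dd (int i) c + 1" using K_step[OF c] by simp
    show "Kc Dd (int (Suc i)) c \<le> T (int (Suc i), c)"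
    proof (cases "(int i, c) \<in> Dd")
      case True
      then have "T (int i, c) < T (int (Suc i), c)" using T_col Dd_D c by simp
      then show ?thesis using Suc.IH True ks by force
    next
      case False
      then have "Kc Dd (int i) c = 0" using K_zero[OF c] by simp
      then show ?thesis using ks T_pos[OF Dd_D[OF c]] by simp
    qed
  qed
qed

lemma K_lower: "(r,c) \<in> Dd \<Longrightarrow> Kc Dd r c \<le> T (r, c)"
  using K_lower_nat[of "nat r"] Dd_mem by auto

lemma K_pos: "(r,c) \<in> Dd \<Longrightarrow> 1 \<le> Kc Dd r c"
  using K_step by simp

lemma A_rows: "b' \<in> D \<Longrightarrow> fst b' \<le> m \<Longrightarrow> b' \<in> Dd"
  using D_eq Dl_rows by (cases b') force

lemma K_upper: "(r,c) \<in> Dd \<Longrightarrow> T (r,c) \<le> Kc Dd r c"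
proof (induction "nat (r * (n+1) - c)" arbitrary: r c rule: less_induct)
  case less
  note rc = less.prems
  have r1: "1 \<le> r" "r \<le> m" "g r \<le> c" "c \<le> n" using rc Dd_mem by auto
  have c1: "1 \<le> c" using g_pos[of r] r1 by linarith
  have rn0: "1 * (n+1) \<le> r * (n+1)" by (rule mult_right_mono) (use r1 c1 in auto)
  then have rn: "n+1 \<le> r * (n+1)" by simp
  have IH: "T (r',c') = Kc Dd r' c'" if "(r',c') \<in> Dd" "r' < r \<or> (r' = r \<and> c < c')" for r' c'
  proof -
    have r'1: "1 \<le> r'" "g r' \<le> c'" "c' \<le> n" "r' \<le> m" using that Dd_mem by auto
    have c'1: "1 \<le> c'" using g_pos[of r'] r'1 by linarith
    have "r' * (n+1) - c' < r * (n+1) - c"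
    proof (cases "r' < r")
      case True
      then have "r' * (n+1) \<le> (r-1) * (n+1)" by (intro mult_right_mono) (use r1 c1 in auto)
      moreover have "(r-1)*(n+1) = r*(n+1) - (n+1)" by (simp add: algebra_simps)
      ultimately show ?thesis using r1 c'1 by linarith
    next
      case False then show ?thesis using that by auto
    qed
    moreover have "0 < r * (n+1) - c" using rn r1 by linarith
    ultimately have "nat (r' * (n+1) - c') < nat (r * (n+1) - c)" using zless_nat_conj by blast
    then have "T (r',c') \<le> Kc Dd r' c'" using less.hyps that(1) by blast
    then show ?thesis using K_lower[OF that(1)] by simp
  qed
  show ?case
  proof (rule ccontr)
    assume nle: "\<not> T (r,c) \<le> Kc Dd r c"
    define v where "v = T (r,c)"
    define L where "L = Kc Dd r c"
    have L1: "1 \<le> L" using K_pos[OF rc] unfolding L_def .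
    have vL: "L < v" using nle v_def L_def by simp
    have v2: "2 \<le> v" using L1 vL by simp
    define A1 where "A1 = {b'\<in>D. rle b' (r,c) \<and> T b' = v}"
    define A0 where "A0 = {b'\<in>D. rle b' (r,c) \<and> T b' = v - 1}"
    have "card {b'\<in>D. rle b' (r,c) \<and> T b' = (v-1)+1} \<le> card {b'\<in>D. rle b' (r,c) \<and> T b' = v-1}"
      using lat[OF Dd_D[OF rc], of "v-1"] v2 by simp
    then have latv: "card A1 \<le> card A0" using v2 unfolding A1_def A0_def by simp
    define f where "f = (\<lambda>(a::int,b::int). (a+1,b))"
    have inj: "inj_on f A0" unfolding f_def inj_on_def by auto
    have img: "f ` A0 \<subseteq> A1 - {(r,c)}"
    proof
      fix y assume "y \<in> f ` A0"
      then obtain r' c' where b': "(r',c') \<in> A0" "y = (r'+1, c')" unfolding f_def by auto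
      have inD: "(r',c') \<in> D" and le: "rle (r',c') (r,c)" and tv: "T (r',c') = v - 1"
        using b' A0_def by auto
      have "r' \<le> r" using le rle_def by auto
      then have inDd: "(r',c') \<in> Dd" using A_rows inD r1 by auto
      have neq: "(r',c') \<noteq> (r,c)" using tv v_def v2 by auto
      have ord: "r' < r \<or> (r' = r \<and> c < c')" using le neq rle_def by auto
      have Kv: "Kc Dd r' c' = v - 1" using IH[OF inDd ord] tv by simp
      have rlt: "r' < r"
      proof (rule ccontr)
        assume "\<not> r' < r" then have "r' = r" "c < c'" using ord by auto
        then have "T (r,c) \<le> T (r',c')" using T_row inD Dd_D[OF rc] by auto
        then show False using tv v_def v2 by simp
      qed
      have r'1: "1 \<le> r'" "g r' \<le> c'" "c' \<le> n" using inDd Dd_mem by auto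
      have "g (r'+1) \<le> g r'" using g_anti[of r' "r'+1"] r'1 rlt r1 by auto
      then have inDd2: "(r'+1, c') \<in> Dd" using Dd_mem r'1 rlt r1 by auto
      have ord2: "r'+1 < r \<or> (r'+1 = r \<and> c < c')"
      proof (cases "r'+1 = r")
        case True
        show ?thesis
        proof (rule ccontr)
          assume "\<not> ?thesis" then have "c' \<le> c" using True by auto
          then have "Kc Dd (r-1) c' \<le> Kc Dd (r-1) c" using K_mono_c r1 by auto
          moreover have "Kc Dd r c = Kc Dd (r-1) c + 1" using K_step[OF rc] .
          moreover have "r' = r - 1" using True by simp
          ultimately show False using Kv vL L_def by simp
        qed
      next
        case False then show ?thesis using rlt by auto
      qed
      have "T (r'+1, c') = Kc Dd (r'+1) c'" using IH[OF inDd2 ord2] .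
      also have "\<dots> = Kc Dd r' c' + 1" using K_step[OF inDd2] by simp
      finally have "T (r'+1,c') = v" using Kv v2 by simp
      moreover have "rle (r'+1, c') (r,c)" using ord2 rle_def by auto
      moreover have "(r'+1,c') \<noteq> (r,c)" using ord2 by auto
      ultimately show "y \<in> A1 - {(r,c)}" using b'(2) Dd_D[OF inDd2] A1_def by auto
    qed
    have finA1: "finite A1" using fin A1_def by simp
    have "card A0 \<le> card (A1 - {(r,c)})" using card_inj_on_le[OF inj img] finA1 by simp
    also have "\<dots> < card A1" using finA1
      by (rule card_Diff1_less) (simp add: A1_def Dd_D[OF rc] rle_def v_def)
    finally show False using latv by simp
  qed
qed

lemma K_eq: "(r,c) \<in> Dd \<Longrightarrow> T (r,c) = Kc Dd r c"
  using K_upper K_lower by (simp add: le_antisym)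

lemma F_in: "1 \<le> x \<Longrightarrow> x \<le> j \<Longrightarrow> (m+1, x - j) \<in> Dl"
  using Dl_row1 j_le by auto

lemma F_mono: "1 \<le> x \<Longrightarrow> x \<le> y \<Longrightarrow> y \<le> j \<Longrightarrow> T (m+1, x - j) \<le> T (m+1, y - j)"
  using T_row[OF Dl_D[OF F_in[of x]] Dl_D[OF F_in[of y]]] by auto

lemma h_lt: "1 \<le> c \<Longrightarrow> c \<le> j \<Longrightarrow> Kc Dd m c < T (m+1, c - j)"
proof (induction "nat c" arbitrary: c rule: less_induct)
  case less
  have c1: "1 \<le> c" "c \<le> j" using less.prems by auto
  define F where "F x = T (m+1, x - j)" for x
  have IH: "Kc Dd m c' < F c'" if "1 \<le> c'" "c' < c" for c'
    using less.hyps[of c'] that c1 F_def by auto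
  show ?case
  proof (rule ccontr)
    assume nt: "\<not> Kc Dd m c < T (m+1, c - j)"
    define v where "v = F c"
    have vh: "v \<le> Kc Dd m c" using nt v_def F_def by simp
    have v2: "2 \<le> v" using ones[of "c - j"] c1 v_def F_def by simp
    define X where "X = {x. 1 \<le> x \<and> x \<le> c \<and> F x = v}"
    have finX: "finite X" unfolding X_def by (rule finite_subset[of _ "{1..c}"]) auto
    have cX: "c \<in> X" using c1 v_def X_def by simp
    define c0 where "c0 = Min X"
    have c0X: "c0 \<in> X" using Min_in[OF finX] cX c0_def by blast
    have c0p: "1 \<le> c0" "c0 \<le> c" "F c0 = v" using c0X X_def by auto
    have below: "F x < v" if "1 \<le> x" "x < c0" for x
    proof -
      have "F x \<le> F c" using F_mono[of x c] that c0p c1 F_def by simp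
      moreover have "F x \<noteq> v"
      proof
        assume "F x = v"
        then have "x \<in> X" using that c0p X_def by simp
        then have "c0 \<le> x" using Min_le[OF finX] c0_def by blast
        then show False using that by simp
      qed
      ultimately show ?thesis using v_def by simp
    qed
    have mid: "F x = v" if "c0 \<le> x" "x \<le> c" for x
      using F_mono[of c0 x] F_mono[of x c] that c0p c1 F_def v_def by fastforce
    define b0 where "b0 = (m+1, c0 - j)"
    have b0D: "b0 \<in> D" using Dl_D[OF F_in[of c0]] c0p c1 b0_def by simp
    define A1 where "A1 = {b'\<in>D. rle b' b0 \<and> T b' = v}"
    define A0 where "A0 = {b'\<in>D. rle b' b0 \<and> T b' = v - 1}"
    have "card {b'\<in>D. rle b' b0 \<and> T b' = (v-1)+1} \<le> card {b'\<in>D. rle b' b0 \<and> T b' = v-1}"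
      using lat[OF b0D, of "v-1"] v2 by simp
    then have latv: "card A1 \<le> card A0" using v2 unfolding A1_def A0_def by simp
    have A0p: "(r',c') \<in> Dd \<and> r' \<le> m \<and> Kc Dd r' c' = v - 1" if "(r',c') \<in> A0" for r' c'
    proof -
      have inD: "(r',c') \<in> D" and le: "rle (r',c') b0" and tv: "T (r',c') = v - 1"
        using that A0_def by auto
      have "r' \<le> m"
      proof (rule ccontr)
        assume "\<not> r' \<le> m"
        then have re: "r' = m+1" and cl: "c0 - j \<le> c'" using le b0_def rle_def by auto
        have "T (m+1, c0-j) \<le> T (m+1, c')" using T_row b0D b0_def inD re cl by auto
        then show False using tv c0p F_def v2 re by simp
      qed
      then have "(r',c') \<in> Dd" using A_rows inD by auto
      then show ?thesis using K_eq tv \<open>r' \<le> m\<close> by simp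
    qed
    define f where "f = (\<lambda>(a::int,b::int). if a < m then (a+1,b) else (m+1, b - j))"
    have inj: "inj_on f A0"
    proof (rule inj_onI)
      fix x y assume xy: "x \<in> A0" "y \<in> A0" "f x = f y"
      obtain a b where x: "x = (a,b)" by (cases x)
      obtain a' b' where y: "y = (a',b')" by (cases y)
      have "a \<le> m" "a' \<le> m" using A0p xy x y by auto
      then show "x = y" using xy(3) x y unfolding f_def by (auto split: if_splits)
    qed
    have img: "f ` A0 \<subseteq> A1 - {(m+1, c - j)}"
    proof
      fix y assume "y \<in> f ` A0"
      then obtain r' c' where b': "(r',c') \<in> A0" "y = f (r',c')" by auto
      have inDd: "(r',c') \<in> Dd" and rm: "r' \<le> m" and Kv: "Kc Dd r' c' = v - 1" using A0p[OF b'(1)] by auto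
      have r'1: "1 \<le> r'" "g r' \<le> c'" "c' \<le> n" using inDd Dd_mem by auto
      show "y \<in> A1 - {(m+1, c - j)}"
      proof (cases "r' < m")
        case True
        then have y: "y = (r'+1, c')" using b'(2) f_def by simp
        have "g (r'+1) \<le> g r'" using g_anti[of r' "r'+1"] r'1 True by auto
        then have inDd2: "(r'+1, c') \<in> Dd" using Dd_mem r'1 True by auto
        have "T (r'+1, c') = Kc Dd (r'+1) c'" using K_eq[OF inDd2] .
        also have "\<dots> = Kc Dd r' c' + 1" using K_step[OF inDd2] by simp
        finally have "T (r'+1,c') = v" using Kv v2 by simp
        moreover have "rle (r'+1, c') b0" using True b0_def rle_def by auto
        ultimately show ?thesis using y Dd_D[OF inDd2] A1_def True by auto
      next
        case False
        then have rm': "r' = m" using rm by simp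
        then have y: "y = (m+1, c' - j)" using b'(2) f_def by simp
        have c'1: "1 \<le> c'" using g_pos[of r'] r'1 rm by linarith
        have Km: "Kc Dd m c' = v - 1" using Kv rm' by simp
        have cc: "c' < c"
        proof (rule ccontr)
          assume "\<not> c' < c"
          then have "Kc Dd m c \<le> Kc Dd m c'" using K_mono_c r'1 by simp
          then show False using Km vh v2 by simp
        qed
        have cc0: "c0 \<le> c'"
        proof (rule ccontr)
          assume "\<not> c0 \<le> c'"
          then have "Kc Dd m c' < F c'" "F c' < v" using IH[of c'] below[of c'] c'1 c0p by auto
          then show False using Km by simp
        qed
        have Fv: "F c' = v" using mid cc0 cc by simp
        have inDl: "(m+1, c' - j) \<in> Dl" using F_in c'1 cc c1 by simp
        have "rle (m+1, c' - j) b0" using cc0 b0_def rle_def by simp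
        then show ?thesis using y Dl_D[OF inDl] Fv F_def A1_def cc by auto
      qed
    qed
    have finA1: "finite A1" using fin A1_def by simp
    have cA1: "(m+1, c - j) \<in> A1"
      using Dl_D[OF F_in[of c]] c1 c0p A1_def b0_def rle_def v_def F_def by simp
    have "card A0 \<le> card (A1 - {(m+1, c - j)})" using card_inj_on_le[OF inj img] finA1 by simp
    also have "\<dots> < card A1" using finA1 cA1 by (rule card_Diff1_less)
    finally show False using latv by simp
  qed
qed

lemma key: "(r,c) \<in> Dd \<Longrightarrow> 1 \<le> c \<Longrightarrow> c \<le> j \<Longrightarrow> T (r,c) < T (m+1, c - j)"
proof -
  assume a: "(r,c) \<in> Dd" "1 \<le> c" "c \<le> j"
  have "T (r,c) = Kc Dd r c" using K_eq[OF a(1)] .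
  also have "\<dots> \<le> Kc Dd m c" using K_mono_r a(1) Dd_mem by simp
  also have "\<dots> < T (m+1, c - j)" using h_lt a by simp
  finally show ?thesis .
qed

end



lemma rl_len: "length (row_lengths alpha) = sum_list alpha"
proof -
  have "map (\<lambda>i. alpha ! i) [0..<length alpha] = alpha" by (rule map_nth)
  then show ?thesis unfolding row_lengths_def by (simp add: length_concat comp_def)
qed

lemma rl_sorted_gen: "sorted (concat (map (\<lambda>i. replicate (f i) (i+1)) [0..<N]))"
  by (induction N) (auto simp: sorted_append)

lemma rl_sorted: "sorted (row_lengths alpha)"
  unfolding row_lengths_def by (rule rl_sorted_gen)

lemma rl_set: "x \<in> set (row_lengths alpha) \<Longrightarrow> 1 \<le> x \<and> x \<le> length alpha"
  by (auto simp: row_lengths_def)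

lemma rl_last:
  assumes comp: "is_composition alpha" and ne: "alpha \<noteq> []"
  shows "row_lengths alpha ! (sum_list alpha - 1) = length alpha"
proof -
  obtain N where N: "length alpha = Suc N" using ne by (cases alpha) auto
  have eq: "row_lengths alpha = concat (map (\<lambda>i. replicate (alpha ! i) (i+1)) [0..<N]) @ replicate (alpha ! N) (Suc N)"
    unfolding row_lengths_def N by simp
  have "alpha ! N \<in> set alpha" using N by simp
  then have pos: "0 < alpha ! N" using comp unfolding is_composition_def by blast
  have "last (row_lengths alpha) = Suc N" unfolding eq using pos by simp
  moreover have "row_lengths alpha \<noteq> []" unfolding eq using pos by simp
  ultimately show ?thesis using last_conv_nth rl_len N by metis
qed

lemma shift_empty: "shift d {} = {}" by (simp add: shift_def)

lemma finite_shift: "finite D \<Longrightarrow> finite (shift d D)" by (simp add: shift_def)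

lemma ferrers_mem: "(r,c) \<in> ferrers lam \<longleftrightarrow> 1 \<le> r \<and> r \<le> int (length lam) \<and> 1 \<le> c \<and> c \<le> int (lam ! nat (r - 1))"
  by (simp add: ferrers_def)

lemma finite_ferrers: "finite (ferrers lam)"
proof (rule finite_subset[of _ "{1..int (length lam)} \<times> {1..int (sum_list lam)}"])
  show "ferrers lam \<subseteq> {1..int (length lam)} \<times> {1..int (sum_list lam)}"
  proof
    fix x assume "x \<in> ferrers lam"
    then obtain r c where x: "x = (r,c)" "1 \<le> r" "r \<le> int (length lam)" "1 \<le> c" "c \<le> int (lam ! nat (r - 1))"
      by (cases x) (auto simp: ferrers_mem)
    have "nat (r - 1) < length lam" using x by linarith
    then have "lam ! nat (r - 1) \<le> sum_list lam" by (rule elem_le_sum_list)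
    then show "x \<in> {1..int (length lam)} \<times> {1..int (sum_list lam)}" using x by auto
  qed
qed simp

lemma ferrers_Nil: "ferrers [] = {}" by (auto simp: ferrers_def)

lemma delta_mem: "(r,c) \<in> delta alpha \<longleftrightarrow> 1 \<le> r \<and> r \<le> int (sum_list alpha) \<and>
      int (length alpha) - int (row_lengths alpha ! nat (r - 1)) + 1 \<le> c \<and> c \<le> int (length alpha)"
  by (simp add: delta_def)

lemma delta_rows: "(r,c) \<in> delta alpha \<Longrightarrow> 1 \<le> r \<and> r \<le> int (sum_list alpha)"
  by (simp add: delta_mem)

lemma delta_cols: "(r,c) \<in> delta alpha \<Longrightarrow> 1 \<le> c"
proof -
  assume a: "(r,c) \<in> delta alpha"
  then have "nat (r - 1) < length (row_lengths alpha)" using rl_len delta_mem by (simp; linarith)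
  then have "row_lengths alpha ! nat (r - 1) \<le> length alpha" using rl_set nth_mem by blast
  then show ?thesis using a delta_mem by simp
qed

lemma finite_delta: "finite (delta alpha)"
proof (rule finite_subset[of _ "{1..int (sum_list alpha)} \<times> {1..int (length alpha)}"])
  show "delta alpha \<subseteq> {1..int (sum_list alpha)} \<times> {1..int (length alpha)}"
    using delta_rows delta_cols delta_mem by auto
qed simp

lemma delta_Nil: "delta [] = {}" by (auto simp: delta_def)




lemma main_lam_nil:
  assumes "semistandard (direct_sum (ferrers []) (delta alpha)) T"
    and "lattice_word (reading_word (direct_sum (ferrers []) (delta alpha)) T)"
  shows "semistandard (S_diag [] alpha k) (moved_tableau [] alpha k T)
       \<and> lattice_word (reading_word (S_diag [] alpha k) (moved_tableau [] alpha k T))"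
proof -
  have DS: "direct_sum (ferrers []) (delta alpha) = delta alpha"
    by (simp add: direct_sum_def ferrers_Nil shift_empty)
  have S: "S_diag [] alpha k = delta alpha"
    by (simp add: S_diag_def foundation_def ferrers_Nil shift_empty)
  have mv: "moved_tableau [] alpha k T (r,c) = T (r,c)" if "(r,c) \<in> delta alpha" for r c
    using that by (simp add: moved_tableau_def)
  have ss: "semistandard (S_diag [] alpha k) (moved_tableau [] alpha k T)"
    using ss_translate[of "delta alpha" T "delta alpha" 0 0] assms(1) mv unfolding DS S by simp
  have "reading_word (S_diag [] alpha k) (moved_tableau [] alpha k T) = reading_word (delta alpha) T"
    unfolding S
    by (rule rw_transfer[where \<rho>=id and \<sigma>="\<lambda>r. id"]) (auto simp: finite_delta strict_mono_def mv)
  then show ?thesis using ss assms(2) DS by simp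
qed

lemma main_alpha_nil:
  assumes "semistandard (direct_sum (ferrers lam) (delta [])) T"
    and "lattice_word (reading_word (direct_sum (ferrers lam) (delta [])) T)"
  shows "semistandard (S_diag lam [] k) (moved_tableau lam [] k T)
       \<and> lattice_word (reading_word (S_diag lam [] k) (moved_tableau lam [] k T))"
proof -
  obtain d1 d2 where d: "dsum_offset (ferrers lam) {} = (d1, d2)" by (cases "dsum_offset (ferrers lam) {}")
  define F where "F = ferrers lam"
  have DS: "direct_sum (ferrers lam) (delta []) = shift (d1,d2) F"
    by (simp add: direct_sum_def delta_Nil d F_def)
  have S: "S_diag lam [] k = shift (0, - int k) F"
    by (simp add: S_diag_def foundation_def delta_Nil F_def)
  have mv: "moved_tableau lam [] k T (r,c) = T (r + d1, c + int k + d2)" for r c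
    by (simp add: moved_tableau_def delta_Nil d)
  have Smem: "(r,c) \<in> shift (0, - int k) F \<longleftrightarrow> (r, c + int k) \<in> F" for r c
    by (simp add: shift_mem)
  have DSmem: "(r,c) \<in> shift (d1,d2) F \<longleftrightarrow> (r - d1, c - d2) \<in> F" for r c
    by (simp add: shift_mem)
  have ss: "semistandard (S_diag lam [] k) (moved_tableau lam [] k T)"
    unfolding S
  proof (rule ss_translate[of "shift (d1,d2) F" T _ d1 "int k + d2"])
    show "semistandard (shift (d1, d2) F) T" using assms(1) DS by simp
  next
    fix r c assume "(r, c) \<in> shift (0, - int k) F"
    then show "(r + d1, c + (int k + d2)) \<in> shift (d1, d2) F" by (simp add: Smem DSmem add.assoc)
  next
    fix r c show "moved_tableau lam [] k T (r, c) = T (r + d1, c + (int k + d2))" by (simp add: mv add.assoc)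
  qed
  have fin: "finite F" by (simp add: F_def finite_ferrers)
  have cols: "{c. (r + d1, c) \<in> shift (d1,d2) F} = (\<lambda>c. c + (int k + d2)) ` {c. (r,c) \<in> shift (0, - int k) F}" for r
  proof (rule set_eqI, rule iffI)
    fix x assume "x \<in> {c. (r + d1, c) \<in> shift (d1,d2) F}"
    then have "(r, x - d2) \<in> F" using DSmem by simp
    then have "x - (int k + d2) \<in> {c. (r,c) \<in> shift (0, - int k) F}" using Smem by (simp add: algebra_simps)
    then show "x \<in> (\<lambda>c. c + (int k + d2)) ` {c. (r,c) \<in> shift (0, - int k) F}"
      by (intro image_eqI[where x="x - (int k + d2)"]) simp_all
  next
    fix x assume "x \<in> (\<lambda>c. c + (int k + d2)) ` {c. (r,c) \<in> shift (0, - int k) F}"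
    then obtain c where "x = c + (int k + d2)" "(r, c + int k) \<in> F" using Smem by auto
    then show "x \<in> {c. (r + d1, c) \<in> shift (d1,d2) F}" using DSmem by (simp add: algebra_simps)
  qed
  have sm: "strict_mono (\<lambda>r::int. r + d1)" by (simp add: strict_mono_def)
  have su: "surj (\<lambda>r::int. r + d1)" by (rule surjI[of _ "\<lambda>r. r - d1"]) simp
  have "reading_word (S_diag lam [] k) (moved_tableau lam [] k T) = reading_word (shift (d1,d2) F) T"
    unfolding S
  proof (rule rw_transfer[where \<rho>="\<lambda>r. r + d1" and \<sigma>="\<lambda>r c. c + (int k + d2)"])
    show "finite (shift (d1,d2) F)" using fin by (rule finite_shift)
    show "finite (shift (0, - int k) F)" using fin by (rule finite_shift)
    show "strict_mono (\<lambda>r::int. r + d1)" by (rule sm)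
    show "surj (\<lambda>r::int. r + d1)" by (rule su)
    show "\<And>r. strict_mono (\<lambda>c::int. c + (int k + d2))" by (simp add: strict_mono_def)
    show "\<And>r. {c. (r + d1, c) \<in> shift (d1,d2) F} = (\<lambda>c. c + (int k + d2)) ` {c. (r,c) \<in> shift (0, - int k) F}"
      by (rule cols)
    show "\<And>r c. (r, c) \<in> shift (0, - int k) F \<Longrightarrow> moved_tableau lam [] k T (r, c) = T (r + d1, c + (int k + d2))"
      by (simp add: mv add.assoc)
  qed
  then show ?thesis using ss assms(2) DS by simp
qed

lemma main_case:
  fixes alpha lam :: "nat list" and k :: nat and T :: tableau
  assumes comp: "is_composition alpha"
    and part: "is_partition lam"
    and h3: "int (part1 lam) - int k \<le> int (length alpha)"
    and h4: "semistandard (direct_sum (ferrers lam) (delta alpha)) T"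
    and h5: "lattice_word (reading_word (direct_sum (ferrers lam) (delta alpha)) T)"
    and h6: "card {c. (fst (dsum_offset (ferrers lam) (delta alpha)) + 1, c)
                   \<in> shift (dsum_offset (ferrers lam) (delta alpha)) (ferrers lam)
                 \<and> T (fst (dsum_offset (ferrers lam) (delta alpha)) + 1, c) = 1} \<le> k"
    and ane: "alpha \<noteq> []" and lne: "lam \<noteq> []"
  shows "semistandard (S_diag lam alpha k) (moved_tableau lam alpha k T)
       \<and> lattice_word (reading_word (S_diag lam alpha k) (moved_tableau lam alpha k T))"
proof -
  define m where "m = int (sum_list alpha)"
  define n where "n = int (length alpha)"
  define p where "p = int (lam ! 0)"
  define j where "j = p - int k"
  define rl where "rl = row_lengths alpha"
  define g where "g r = n - int (rl ! nat (r - 1)) + 1" for r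
  define F where "F = ferrers lam"
  define Dd where "Dd = delta alpha"
  have lamp: "\<forall>x\<in>set lam. 0 < x" and lams: "sorted_wrt (\<ge>) lam" using part is_partition_def by auto
  have p1: "1 \<le> p" using lamp lne p_def by (cases lam) auto
  have lam_le: "lam ! i \<le> lam ! 0" if "i < length lam" for i
  proof (cases "i = 0")
    case False then show ?thesis using sorted_wrt_nth_less[OF lams, of 0 i] that by simp
  qed simp
  have rl_len': "length rl = sum_list alpha" using rl_len rl_def by simp
  have m1: "1 \<le> m"
  proof -
    obtain a as where "alpha = a # as" using ane by (cases alpha) auto
    moreover have "0 < a" using comp calculation is_composition_def by simp
    ultimately show ?thesis using m_def by simp
  qed
  have Dd_mem: "(r,c) \<in> Dd \<longleftrightarrow> 1 \<le> r \<and> r \<le> m \<and> g r \<le> c \<and> c \<le> n" for r c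
    unfolding Dd_def delta_mem g_def m_def n_def rl_def by simp
  have g_anti: "g r' \<le> g r" if "1 \<le> r" "r \<le> r'" "r' \<le> m" for r r'
  proof -
    have "rl ! nat (r - 1) \<le> rl ! nat (r' - 1)"
      using sorted_nth_mono[OF rl_sorted[of alpha, folded rl_def], of "nat (r-1)" "nat (r'-1)"] that rl_len' m_def
      by linarith
    then show ?thesis unfolding g_def by simp
  qed
  have g_pos: "1 \<le> g r" if "1 \<le> r" "r \<le> m" for r
  proof -
    have "nat (r - 1) < length rl" using that rl_len' m_def by linarith
    then have "rl ! nat (r - 1) \<le> length alpha" using rl_set[of _ alpha] nth_mem rl_def by blast
    then show ?thesis unfolding g_def n_def by simp
  qed
  have g_m: "g m = 1"
  proof -
    have "nat (m - 1) = sum_list alpha - 1" using m_def by simp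
    then show ?thesis unfolding g_def using rl_last[OF comp ane] rl_def n_def by simp
  qed
  have n1: "1 \<le> n" using ane n_def by (cases alpha) auto
  have finF: "finite F" using finite_ferrers F_def by simp
  have finDd: "finite Dd" using finite_delta Dd_def by simp
  have tr: "top_right F = (1, p)"
  proof -
    have mn: "Min (fst ` F) = 1"
    proof (rule Min_eqI)
      show "finite (fst ` F)" using finF by simp
      show "\<And>y. y \<in> fst ` F \<Longrightarrow> 1 \<le> y" using F_def ferrers_mem by auto
      have "(1,1) \<in> F" using F_def ferrers_mem lne p1 p_def by (cases lam) auto
      then show "1 \<in> fst ` F" by force
    qed
    have mx: "Max {c. (1, c) \<in> F} = p"
    proof (rule Max_eqI)
      show "finite {c. (1, c) \<in> F}" using finite_row[OF finF] .
      show "\<And>y. y \<in> {c. (1, c) \<in> F} \<Longrightarrow> y \<le> p" using F_def ferrers_mem p_def by auto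
      show "p \<in> {c. (1, c) \<in> F}" using F_def ferrers_mem lne p1 p_def by (cases lam) auto
    qed
    show ?thesis unfolding top_right_def Let_def mn mx by simp
  qed
  have bl: "bottom_left Dd = (m, 1)"
  proof -
    have mx: "Max (fst ` Dd) = m"
    proof (rule Max_eqI)
      show "finite (fst ` Dd)" using finDd by simp
      show "\<And>y. y \<in> fst ` Dd \<Longrightarrow> y \<le> m" using Dd_mem by auto
      have "(m,1) \<in> Dd" using Dd_mem m1 g_m n1 by simp
      then show "m \<in> fst ` Dd" by force
    qed
    have mn: "Min {c. (m, c) \<in> Dd} = 1"
    proof (rule Min_eqI)
      show "finite {c. (m, c) \<in> Dd}" using finite_row[OF finDd] .
      show "\<And>y. y \<in> {c. (m, c) \<in> Dd} \<Longrightarrow> 1 \<le> y" using Dd_mem g_m by auto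
      show "1 \<in> {c. (m, c) \<in> Dd}" using Dd_mem m1 g_m n1 by simp
    qed
    show ?thesis unfolding bottom_left_def Let_def mn mx by simp
  qed
  have doff: "dsum_offset F Dd = (m, - p)"
    unfolding dsum_offset_def tr bl by simp
  define Dl where "Dl = shift (m, -p) F"
  define D where "D = direct_sum F Dd"
  have D_eq: "D = Dl \<union> Dd" unfolding D_def direct_sum_def doff Dl_def ..
  have Dl_mem: "(r,c) \<in> Dl \<longleftrightarrow> (r - m, c + p) \<in> F" for r c
    unfolding Dl_def shift_mem by simp
  have Dl_rows: "m < r" if "(r,c) \<in> Dl" for r c
    using that Dl_mem F_def ferrers_mem by auto
  have Dl_row1: "(m+1,x) \<in> Dl \<longleftrightarrow> 1 - p \<le> x \<and> x \<le> 0" for x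
    using Dl_mem F_def ferrers_mem lne p_def by (cases lam) auto
  have finD: "finite D" using D_eq finF finDd Dl_def finite_shift by simp
  have ssD: "semistandard D T" using h4 D_def F_def Dd_def by simp
  have lwD: "lattice_word (reading_word D T)" using h5 D_def F_def Dd_def by simp
  have latD: "card {b'\<in>D. rle b' b \<and> T b' = i+1} \<le> card {b'\<in>D. rle b' b \<and> T b' = i}"
    if "b \<in> D" "1 \<le> i" for b i
    using lattice_card[OF finD lwD that] .
  have jn: "j \<le> n" using h3 j_def p_def n_def part1_def lne by (cases lam) auto
  have jp: "j \<le> p" using j_def by simp
  have Tpos: "0 < T x" if "x \<in> D" for x using ssD that unfolding semistandard_def by blast
  have Trow: "T (r, c) \<le> T (r, c')" if "(r, c) \<in> D" "(r, c') \<in> D" "c \<le> c'" for r c c'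
    using ssD that unfolding semistandard_def by blast
  have Tcol: "T (r, c) < T (r', c)" if "(r, c) \<in> D" "(r', c) \<in> D" "r < r'" for r r' c
    using ssD that unfolding semistandard_def by blast
  have ones: "2 \<le> T (m+1, x)" if "1 - j \<le> x" "x \<le> 0" for x
  proof (rule ccontr)
    assume "\<not> 2 \<le> T (m+1, x)"
    moreover have xD: "(m+1, x) \<in> D" using Dl_row1 that jp D_eq by auto
    ultimately have T1: "T (m+1, x) = 1" using Tpos by fastforce
    define Y where "Y = {c. (m + 1, c) \<in> Dl \<and> T (m + 1, c) = 1}"
    have "card Y \<le> k" using h6 unfolding Y_def
      by (simp add: doff[unfolded F_def Dd_def] Dl_def F_def)
    moreover have "{1 - p..x} \<subseteq> Y"
    proof
      fix y assume y: "y \<in> {1 - p..x}"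
      then have yD: "(m+1, y) \<in> Dl" using Dl_row1 that by auto
      then have "T (m+1, y) \<le> T (m+1, x)" using Trow[of "m+1" y x] D_eq xD y by auto
      then show "y \<in> Y" using Tpos[of "(m+1,y)"] D_eq yD T1 Y_def by auto
    qed
    moreover have "finite Y" unfolding Y_def by (rule finite_subset[of _ "{1-p..0}"]) (auto simp: Dl_row1)
    ultimately have "card {1 - p..x} \<le> k" using card_mono order_trans by blast
    then show False using that j_def by simp
  qed
  interpret ds: ds_setup D Dl Dd T m n p j g
    by unfold_locales (use D_eq Dd_mem g_anti g_pos Dl_rows Dl_row1 finD ssD latD jn jp ones in auto)
  define F0 where "F0 = foundation lam alpha k"
  have F0_mem: "(r,c) \<in> F0 \<longleftrightarrow> (r - m, c + int k) \<in> F" for r c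
    unfolding F0_def foundation_def shift_mem m_def F_def by simp
  have F0_rows: "m < r" if "(r,c) \<in> F0" for r c
    using that F0_mem F_def ferrers_mem by auto
  have S_eq: "S_diag lam alpha k = Dd \<union> F0" unfolding S_diag_def Dd_def F0_def ..
  have mv: "moved_tableau lam alpha k T (r,c) = (if (r,c) \<in> Dd then T (r,c) else T (r, c + int k - p))" for r c
    using doff unfolding moved_tableau_def Dd_def F_def m_def Let_def by (simp add: algebra_simps)
  have F0_Dl: "(r, c + int k - p) \<in> Dl" if "(r,c) \<in> F0" for r c
    using that F0_mem Dl_mem by simp
  have F0_nDd: "(r,c) \<notin> Dd" if "(r,c) \<in> F0" for r c
    using F0_rows[OF that] Dd_mem by auto
  have F0_cols: "1 - int k \<le> c \<and> c \<le> j" if "(r,c) \<in> F0" for r c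
  proof -
    have a: "1 \<le> r - m" "r - m \<le> int (length lam)" "1 \<le> c + int k" "c + int k \<le> int (lam ! nat (r - m - 1))"
      using that F0_mem F_def ferrers_mem by auto
    have "lam ! nat (r - m - 1) \<le> lam ! 0" using lam_le a by simp
    then show ?thesis using a j_def p_def by simp
  qed
  let ?S = "S_diag lam alpha k" and ?M = "moved_tableau lam alpha k T"
  have ssS: "semistandard ?S ?M"
    unfolding semistandard_def S_eq
  proof (intro conjI allI impI ballI)
    fix x assume "x \<in> Dd \<union> F0"
    then show "0 < ?M x"
    proof
      assume "x \<in> Dd" then show ?thesis using mv Tpos D_eq by (cases x) auto
    next
      assume "x \<in> F0" then show ?thesis using mv Tpos D_eq F0_Dl F0_nDd by (cases x) auto
    qed
  next
    fix r c c' assume a: "(r, c) \<in> Dd \<union> F0" "(r, c') \<in> Dd \<union> F0" "c \<le> c'"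
    show "?M (r, c) \<le> ?M (r, c')"
    proof (cases "r \<le> m")
      case True
      then have "(r,c) \<in> Dd" "(r,c') \<in> Dd" using a F0_rows by force+
      then show ?thesis using mv Trow D_eq a(3) by auto
    next
      case False
      then have "(r,c) \<in> F0" "(r,c') \<in> F0" using a Dd_mem by auto
      then show ?thesis using mv Trow[of r "c + int k - p" "c' + int k - p"] D_eq a(3) F0_Dl F0_nDd by auto
    qed
  next
    fix r r' c assume a: "(r, c) \<in> Dd \<union> F0" "(r', c) \<in> Dd \<union> F0" "r < r'"
    show "?M (r, c) < ?M (r', c)"
    proof (cases "r' \<le> m")
      case True
      then have "(r,c) \<in> Dd" "(r',c) \<in> Dd" using a F0_rows by force+
      then show ?thesis using mv Tcol D_eq a(3) by auto
    next
      case r'm: False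
      then have r'F: "(r',c) \<in> F0" using a Dd_mem by auto
      show ?thesis
      proof (cases "m < r")
        case True
        then have "(r,c) \<in> F0" using a Dd_mem by auto
        then show ?thesis using mv Tcol[of r "c + int k - p" r'] D_eq a(3) F0_Dl F0_nDd r'F by auto
      next
        case False
        then have rD: "(r,c) \<in> Dd" using a F0_rows by force
        have c1: "1 \<le> c" "c \<le> j" using rD Dd_mem g_pos F0_cols[OF r'F] by force+
        have k1: "T (r,c) < T (m+1, c - j)" using ds.key[OF rD c1] .
        have cj: "c - j = c + int k - p" using j_def by simp
        have "T (m+1, c + int k - p) \<le> T (r', c + int k - p)"
        proof (cases "r' = m + 1")
          case False
          then have "m + 1 < r'" using r'm by simp
          moreover have "(m+1, c + int k - p) \<in> Dl" using Dl_row1 c1 j_def jp by simp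
          ultimately show ?thesis using Tcol D_eq F0_Dl[OF r'F] by (simp add: less_imp_le)
        qed simp
        then show ?thesis using k1 cj mv rD F0_nDd[OF r'F] by simp
      qed
    qed
  qed
  define \<sigma> where "\<sigma> r = (if r \<le> m then (\<lambda>c::int. c) else (\<lambda>c. c + int k - p))" for r
  have finS: "finite ?S" using S_eq finDd F0_def foundation_def finite_shift finF F_def by simp
  have rw: "reading_word ?S ?M = reading_word D T"
  proof (rule rw_transfer[where \<rho>=id and \<sigma>=\<sigma>])
    show "finite D" by (rule finD)
    show "finite ?S" by (rule finS)
    show "strict_mono (id :: int \<Rightarrow> int)" by (simp add: strict_mono_def)
    show "surj (id :: int \<Rightarrow> int)" by simp
    show "strict_mono (\<sigma> r)" for r unfolding \<sigma>_def by (simp add: strict_mono_def)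
    show "{c. (id r, c) \<in> D} = \<sigma> r ` {c. (r, c) \<in> ?S}" for r
    proof (cases "r \<le> m")
      case True
      have "{c. (r, c) \<in> D} = {c. (r, c) \<in> Dd}" using D_eq True Dl_rows by force
      moreover have "{c. (r, c) \<in> ?S} = {c. (r, c) \<in> Dd}" using S_eq True F0_rows by force
      ultimately show ?thesis using True \<sigma>_def by simp
    next
      case False
      have e1: "{c. (r, c) \<in> D} = {c. (r - m, c + p) \<in> F}" using D_eq False Dd_mem Dl_mem by auto
      have e2: "{c. (r, c) \<in> ?S} = {c. (r - m, c + int k) \<in> F}" using S_eq False Dd_mem F0_mem by auto
      show ?thesis unfolding e1 e2 id_def
      proof (rule set_eqI, rule iffI)
        fix x assume "x \<in> {c. (r - m, c + p) \<in> F}"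
        then have "x - int k + p \<in> {c. (r - m, c + int k) \<in> F}" by (simp add: algebra_simps)
        moreover have "x = \<sigma> r (x - int k + p)" using False \<sigma>_def by simp
        ultimately show "x \<in> \<sigma> r ` {c. (r - m, c + int k) \<in> F}" by blast
      next
        fix x assume "x \<in> \<sigma> r ` {c. (r - m, c + int k) \<in> F}"
        then obtain c where "x = c + int k - p" "(r - m, c + int k) \<in> F" using False \<sigma>_def by auto
        then show "x \<in> {c. (r - m, c + p) \<in> F}" by (simp add: algebra_simps)
      qed
    qed
    show "?M (r, c) = T (id r, \<sigma> r c)" if "(r, c) \<in> ?S" for r c
    proof (cases "r \<le> m")
      case True
      then have "(r,c) \<in> Dd" using that S_eq F0_rows by force
      then show ?thesis using mv True \<sigma>_def by simp
    next
      case False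
      then have "(r,c) \<notin> Dd" using Dd_mem by auto
      then show ?thesis using mv False \<sigma>_def by simp
    qed
  qed
  show ?thesis using ssS rw lwD by simp
qed


theorem mainTheorem2:
  fixes alpha lam :: "nat list" and k :: nat and T :: tableau
  assumes "is_composition alpha"
    and "is_partition lam"
    and "int (part1 lam) - int k \<le> int (length alpha)"
    and "semistandard (direct_sum (ferrers lam) (delta alpha)) T"
    and "lattice_word (reading_word (direct_sum (ferrers lam) (delta alpha)) T)"
    and "card {c. (fst (dsum_offset (ferrers lam) (delta alpha)) + 1, c)
                   \<in> shift (dsum_offset (ferrers lam) (delta alpha)) (ferrers lam)
                 \<and> T (fst (dsum_offset (ferrers lam) (delta alpha)) + 1, c) = 1} \<le> k"
  shows "semistandard (S_diag lam alpha k) (moved_tableau lam alpha k T)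
       \<and> lattice_word (reading_word (S_diag lam alpha k) (moved_tableau lam alpha k T))"
proof (cases "lam = []")
  case True
  then show ?thesis using main_lam_nil[of alpha T k] assms(4,5) by simp
next
  case lne: False
  show ?thesis
  proof (cases "alpha = []")
    case True
    then show ?thesis using main_alpha_nil[of lam T k] assms(4,5) by simp
  next
    case False
    show ?thesis using main_case[OF assms False lne] .
  qed
qed

end
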